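(* Let $f:\mathbb{R}\times[0,1]\to\mathbb{R}$ be measurable, let $\mu_0\in\mathbb{R}$ be fixed, let $(\xi_t)_{t\ge 0}$ be independent random variables each uniformly distributed on $[0,1]$, and define $\mu_{t+1}=\mu_t+f(\mu_t,\xi_t)$ for $t\ge 0$. Let $F(\mu,x)=\mathbb{P}_{\xi\sim U([0,1])}(f(\mu,\xi)\le x)$ and $\bar f(\mu)=\mathbb{E}_{\xi\sim U([0,1])}[f(\mu,\xi)]$. Assume that $F$ is continuous at $(\mu,0)$ for every $\mu\in\mathbb{R}$, and that there exists $\mu_\circ\in\mathbb{R}$ such that $F(\mu,0)<1$ for all $\mu\ge\mu_\circ$ and $F(\mu,0)>0$ for all $\mu\le\mu_\circ$. Assume additionally that there exists $c\in\mathbb{R}$ such that $|\mu_{t+1}-\mu_t|\le c$ almost surely for all $t$, and that there exists $\epsilon>0$ such that $\bar f(\mu)>\epsilon$ for all sufficiently large $\mu$ and $\bar f(\mu)<-\epsilon$ for all sufficiently small (i.e. sufficiently negative) $\mu$. Then almost surely either $\lim_{t\to\infty}\mu_t=\infty$ or $\lim_{t\to\infty}\mu_t=-\infty$.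
   Context: $U([0,1])$ denotes the uniform distribution on $[0,1]$. The sequence $(\mu_t)$ models a user's interest in a fixed item over time; the conclusion is called strong degeneracy. *)

theory Defs
  imports "HOL-Probability.Probability"
begin

primrec proc :: "(real \<Rightarrow> real \<Rightarrow> real) \<Rightarrow> real \<Rightarrow> (nat \<Rightarrow> 'a \<Rightarrow> real) \<Rightarrow> nat \<Rightarrow> 'a \<Rightarrow> real" where
  "proc f m0 \<xi> 0 \<omega> = m0"
| "proc f m0 \<xi> (Suc t) \<omega> = proc f m0 \<xi> t \<omega> + f (proc f m0 \<xi> t \<omega>) (\<xi> t \<omega>)"

definition U01 :: "real measure" where
  "U01 = uniform_measure lborel {0..1}"

definition cdfF :: "(real \<Rightarrow> real \<Rightarrow> real) \<Rightarrow> real \<Rightarrow> real \<Rightarrow> real" where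
  "cdfF f m x = measure U01 {u \<in> space U01. f m u \<le> x}"

definition fbar :: "(real \<Rightarrow> real \<Rightarrow> real) \<Rightarrow> real \<Rightarrow> real" where
  "fbar f m = integral\<^sup>L U01 (\<lambda>u. f m u)"

end

theory Submission
  imports Defs
begin


abbreviation SS :: "(nat \<Rightarrow> real) measure" where
  "SS \<equiv> PiM UNIV (\<lambda>_. U01)"

lemma U01_prob: "prob_space U01"
  unfolding U01_def by (rule prob_space_uniform_measure) auto

lemma sets_U01[simp, measurable_cong]: "sets U01 = sets borel"
  unfolding U01_def by simp

lemma space_U01[simp]: "space U01 = UNIV"
  unfolding U01_def by simp

interpretation U: prob_space U01 by (rule U01_prob)

interpretation SQ: sequence_space U01
  unfolding sequence_space_def product_prob_space_def product_sigma_finite_def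
    product_prob_space_axioms_def
  using U01_prob by (auto simp: prob_space_imp_sigma_finite)

lemma space_SS[simp]: "space SS = UNIV"
  by (auto simp: space_PiM PiE_def extensional_def)

lemma sets_SS: "sets SS = sets (PiM UNIV (\<lambda>_. borel :: real measure))"
  by (rule sets_PiM_cong) auto

primrec traj :: "(real \<Rightarrow> real \<Rightarrow> real) \<Rightarrow> real \<Rightarrow> (nat \<Rightarrow> real) \<Rightarrow> nat \<Rightarrow> real" where
  "traj f x w 0 = x"
| "traj f x w (Suc n) = traj f x w n + f (traj f x w n) (w n)"

lemma proc_path: "proc f m0 \<xi> t \<omega> = traj f m0 (\<lambda>i. \<xi> i \<omega>) t"
  by (induction t) auto

lemma traj_case_nat: "traj f x (case_nat s w) (Suc n) = traj f (x + f x s) w n"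
  by (induction n) auto

lemma traj_comb_le: "k \<le> r \<Longrightarrow> traj f x (comb_seq r w w') k = traj f x w k"
  by (induction k) (auto simp: comb_seq_less)

lemma traj_comb_add: "traj f x (comb_seq r w w') (r + s) = traj f (traj f x w r) w' s"
proof (induction s)
  case 0 then show ?case by (simp add: traj_comb_le)
next
  case (Suc s)
  have "comb_seq r w w' (r + s) = w' s" using comb_seq_add[of r w w' s] by (simp add: add.commute)
  with Suc show ?case by simp
qed

locale fctx =
  fixes f :: "real \<Rightarrow> real \<Rightarrow> real"
  assumes f_meas: "(\<lambda>(m, u). f m u) \<in> borel_measurable borel"
begin

lemma f_comp[measurable (raw)]:
  assumes [measurable]: "a \<in> borel_measurable N" "b \<in> borel_measurable N"
  shows "(\<lambda>z. f (a z) (b z)) \<in> borel_measurable N"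
proof -
  have "(\<lambda>z. (a z, b z)) \<in> measurable N (borel \<Otimes>\<^sub>M borel)" by measurable
  then have "(\<lambda>z. (a z, b z)) \<in> measurable N borel"
    by (simp add: borel_prod)
  from measurable_compose[OF this f_meas] show ?thesis by simp
qed


lemma comp_meas:
  assumes "w \<in> measurable N SS"
  shows "(\<lambda>z. w z n) \<in> borel_measurable N"
proof -
  have "(\<lambda>z. w z n) \<in> measurable N U01"
    using measurable_compose[OF assms measurable_component_singleton[of n UNIV "\<lambda>_. U01"]]
    by simp
  then show ?thesis unfolding measurable_cong_sets[OF refl sets_U01] .
qed

lemma traj_meas[measurable (raw)]:
  assumes "x \<in> borel_measurable N" "w \<in> measurable N SS"
  shows "(\<lambda>z. traj f (x z) (w z) n) \<in> borel_measurable N"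
proof (induction n)
  case 0 then show ?case using assms by simp
next
  case (Suc n)
  show ?case unfolding traj.simps
    by (intro borel_measurable_add Suc f_comp comp_meas assms)
qed


lemma cn_meas: "(\<lambda>(s, w). case_nat s w) \<in> measurable (U01 \<Otimes>\<^sub>M SS) SS"
proof -
  have "(\<lambda>x. case_nat (fst x) (snd x)) \<in> measurable (U01 \<Otimes>\<^sub>M SS) SS"
    by (rule measurable_case_nat'[OF measurable_fst measurable_snd])
  then show ?thesis by (simp add: split_beta')
qed

lemma cs_meas: "(\<lambda>(w, w'). comb_seq r w w') \<in> measurable (SS \<Otimes>\<^sub>M SS) SS"
  by (rule measurable_comb_seq)

lemma one_step:
  assumes A: "A \<in> sets SS"
  shows "emeasure SS A = (\<integral>\<^sup>+ s. emeasure SS {w. case_nat s w \<in> A} \<partial>U01)"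
proof -
  note m = cn_meas
  have "emeasure SS A = emeasure (distr (U01 \<Otimes>\<^sub>M SS) SS (\<lambda>(s, w). case_nat s w)) A"
    by (simp add: SQ.PiM_iter)
  also have "\<dots> = emeasure (U01 \<Otimes>\<^sub>M SS) ((\<lambda>(s, w). case_nat s w) -` A \<inter> space (U01 \<Otimes>\<^sub>M SS))"
    by (rule emeasure_distr[OF m A])
  also have "\<dots> = (\<integral>\<^sup>+ s. emeasure SS (Pair s -` ((\<lambda>(s, w). case_nat s w) -` A \<inter> space (U01 \<Otimes>\<^sub>M SS))) \<partial>U01)"
    by (rule SQ.emeasure_pair_measure_alt) (rule measurable_sets[OF m A])
  also have "\<dots> = (\<integral>\<^sup>+ s. emeasure SS {w. case_nat s w \<in> A} \<partial>U01)"
    by (auto simp: space_pair_measure intro!: nn_integral_cong arg_cong[where f="emeasure SS"])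
  finally show ?thesis .
qed

lemma comb_step:
  assumes A: "A \<in> sets SS"
  shows "emeasure SS A = (\<integral>\<^sup>+ w. emeasure SS {w'. comb_seq r w w' \<in> A} \<partial>SS)"
proof -
  note m = cs_meas[of r]
  have "emeasure SS A = emeasure (distr (SS \<Otimes>\<^sub>M SS) SS (\<lambda>(w, w'). comb_seq r w w')) A"
    by (simp add: SQ.PiM_comb_seq)
  also have "\<dots> = emeasure (SS \<Otimes>\<^sub>M SS) ((\<lambda>(w, w'). comb_seq r w w') -` A \<inter> space (SS \<Otimes>\<^sub>M SS))"
    by (rule emeasure_distr[OF m A])
  also have "\<dots> = (\<integral>\<^sup>+ w. emeasure SS (Pair w -` ((\<lambda>(w, w'). comb_seq r w w') -` A \<inter> space (SS \<Otimes>\<^sub>M SS))) \<partial>SS)"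
    by (rule SQ.emeasure_pair_measure_alt) (rule measurable_sets[OF m A])
  also have "\<dots> = (\<integral>\<^sup>+ w. emeasure SS {w'. comb_seq r w w' \<in> A} \<partial>SS)"
    by (auto simp: space_pair_measure intro!: nn_integral_cong arg_cong[where f="emeasure SS"])
  finally show ?thesis .
qed

lemma one_step_AE:
  assumes "AE w in SS. P w"
  shows "AE s in U01. AE w in SS. P (case_nat s w)"
proof -
  interpret pair_sigma_finite U01 SS ..
  have "AE w in distr (U01 \<Otimes>\<^sub>M SS) SS (\<lambda>(s, w). case_nat s w). P w"
    by (subst SQ.PiM_iter) (rule assms)
  then have "AE x in U01 \<Otimes>\<^sub>M SS. P ((\<lambda>(s, w). case_nat s w) x)"
    by (rule AE_distrD[OF cn_meas])
  then have "AE x in U01 \<Otimes>\<^sub>M SS. P (case_nat (fst x) (snd x))"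
    by (simp add: split_beta')
  from AE_pair[OF this] show ?thesis by simp
qed

lemma comb_AE:
  assumes "AE w in SS. P w"
  shows "AE w in SS. AE w' in SS. P (comb_seq r w w')"
proof -
  interpret pair_sigma_finite SS SS ..
  have "AE w in distr (SS \<Otimes>\<^sub>M SS) SS (\<lambda>(w, w'). comb_seq r w w'). P w"
    by (subst SQ.PiM_comb_seq) (rule assms)
  then have "AE x in SS \<Otimes>\<^sub>M SS. P ((\<lambda>(w, w'). comb_seq r w w') x)"
    by (rule AE_distrD[OF cs_meas])
  then have "AE x in SS \<Otimes>\<^sub>M SS. P (comb_seq r (fst x) (snd x))"
    by (simp add: split_beta')
  from AE_pair[OF this] show ?thesis by simp
qed

definition Bnd :: "real \<Rightarrow> real \<Rightarrow> bool" where
  "Bnd c x \<longleftrightarrow> (AE w in SS. \<forall>s. \<bar>f (traj f x w s) (w s)\<bar> \<le> c)"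

lemma Bnd_step:
  assumes "Bnd c x"
  shows "AE s in U01. \<bar>f x s\<bar> \<le> c \<and> Bnd c (x + f x s)"
proof -
  have "AE s in U01. AE w in SS. \<forall>t. \<bar>f (traj f x (case_nat s w) t) (case_nat s w t)\<bar> \<le> c"
    using one_step_AE assms unfolding Bnd_def by blast
  then show ?thesis
  proof (rule eventually_mono)
    fix s assume a: "AE w in SS. \<forall>t. \<bar>f (traj f x (case_nat s w) t) (case_nat s w t)\<bar> \<le> c"
    have "AE w in SS. \<bar>f x s\<bar> \<le> c"
      using a by (rule eventually_mono) (metis traj.simps(1) nat.simps(4))
    then have 1: "\<bar>f x s\<bar> \<le> c"
      by (simp add: SQ.P.AE_const)
    have "AE w in SS. \<forall>t. \<bar>f (traj f (x + f x s) w t) (w t)\<bar> \<le> c"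
      using a by (rule eventually_mono) (metis traj_case_nat nat.simps(5))
    with 1 show "\<bar>f x s\<bar> \<le> c \<and> Bnd c (x + f x s)" unfolding Bnd_def by simp
  qed
qed

lemma Bnd_comb:
  assumes "Bnd c x"
  shows "AE w in SS. Bnd c (traj f x w r)"
proof -
  have "AE w in SS. AE w' in SS. \<forall>t. \<bar>f (traj f x (comb_seq r w w') t) (comb_seq r w w' t)\<bar> \<le> c"
    using comb_AE assms unfolding Bnd_def by blast
  then show ?thesis
  proof (rule eventually_mono)
    fix w assume a: "AE w' in SS. \<forall>t. \<bar>f (traj f x (comb_seq r w w') t) (comb_seq r w w' t)\<bar> \<le> c"
    show "Bnd c (traj f x w r)" unfolding Bnd_def
      using a
    proof (rule eventually_mono)
      fix w' assume "\<forall>t. \<bar>f (traj f x (comb_seq r w w') t) (comb_seq r w w' t)\<bar> \<le> c"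
      then have "\<bar>f (traj f x (comb_seq r w w') (r + t)) (comb_seq r w w' (r + t))\<bar> \<le> c" for t
        by blast
      then show "\<forall>t. \<bar>f (traj f (traj f x w r) w' t) (w' t)\<bar> \<le> c"
        by (metis traj_comb_add comb_seq_add add.commute)
    qed
  qed
qed

end


lemma exp_quad: fixes t :: real assumes "\<bar>t\<bar> \<le> 1" shows "exp t \<le> 1 + t + t\<^sup>2"
proof (cases "t \<ge> 0")
  case True
  then show ?thesis using exp_bound[of t] assms by (auto simp: power2_eq_square)
next
  case False
  define s where "s = -t"
  have s: "0 < s" "s \<le> 1" using False assms by (auto simp: s_def)
  have "exp s \<ge> 1 + s" by simp
  then have "exp t \<le> 1 / (1 + s)" using s
    by (simp add: s_def exp_minus field_simps)
  also have "\<dots> \<le> 1 - s + s\<^sup>2"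
    using s by (simp add: field_simps power2_eq_square)
  finally show ?thesis by (simp add: s_def)
qed

context fctx begin

lemma meas_const[measurable]: "(\<lambda>s. f y s) \<in> borel_measurable U01"
proof -
  have "(\<lambda>s. f y s) \<in> borel_measurable borel" by (intro f_comp) auto
  then show ?thesis by (simp add: measurable_cong_sets[OF sets_U01 refl])
qed

lemma mgf_le1:
  assumes c: "c > 0" and bd: "AE s in U01. \<bar>f y s\<bar> \<le> c" and fb: "fbar f y \<ge> \<epsilon>"
    and l: "0 < l" "l \<le> 1 / c" "l * c\<^sup>2 \<le> \<epsilon>"
  shows "(\<integral>\<^sup>+ s. ennreal (exp (- l * f y s)) \<partial>U01) \<le> 1"
proof -
  have int: "integrable U01 (\<lambda>s. f y s)"
    by (rule U.integrable_const_bound[where B=c]) (use bd in auto)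
  have lc: "l * c \<le> 1" using l c by (simp add: field_simps)
  have pt: "exp (- l * f y s) \<le> 1 - l * f y s + l\<^sup>2 * c\<^sup>2" if "\<bar>f y s\<bar> \<le> c" for s
  proof -
    have a: "\<bar>- l * f y s\<bar> \<le> 1"
      using that l lc by (simp add: abs_mult) (smt (verit) mult_left_mono)
    have "(- l * f y s)\<^sup>2 \<le> l\<^sup>2 * c\<^sup>2"
      using that l by (simp add: power_mult_distrib power2_le_iff_abs_le mult_left_mono)
    with exp_quad[OF a] show ?thesis by simp
  qed
  have "(\<integral>\<^sup>+ s. ennreal (exp (- l * f y s)) \<partial>U01) \<le> (\<integral>\<^sup>+ s. ennreal (1 - l * f y s + l\<^sup>2 * c\<^sup>2) \<partial>U01)"
    using bd by (intro nn_integral_mono_AE) (auto elim!: eventually_mono intro!: ennreal_leI dest: pt)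
  also have "\<dots> = ennreal (\<integral> s. (1 - l * f y s + l\<^sup>2 * c\<^sup>2) \<partial>U01)"
  proof (rule nn_integral_eq_integral)
    show "integrable U01 (\<lambda>s. 1 - l * f y s + l\<^sup>2 * c\<^sup>2)" using int by auto
    show "AE s in U01. 0 \<le> 1 - l * f y s + l\<^sup>2 * c\<^sup>2"
      using bd
    proof (rule eventually_mono)
      fix s assume "\<bar>f y s\<bar> \<le> c"
      then have "l * f y s \<le> l * c" using l by (intro mult_left_mono) auto
      then show "0 \<le> 1 - l * f y s + l\<^sup>2 * c\<^sup>2" using lc by (smt (verit) zero_le_power2 mult_nonneg_nonneg)
    qed
  qed
  also have "(\<integral> s. (1 - l * f y s + l\<^sup>2 * c\<^sup>2) \<partial>U01) = 1 - l * fbar f y + l\<^sup>2 * c\<^sup>2"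
    using int U.prob_space unfolding fbar_def by simp
  also have "ennreal (1 - l * fbar f y + l\<^sup>2 * c\<^sup>2) \<le> ennreal 1"
  proof (rule ennreal_leI)
    have "l * (l * c\<^sup>2) \<le> l * \<epsilon>" using l by (intro mult_left_mono) auto
    moreover have "l * \<epsilon> \<le> l * fbar f y" using l fb by (intro mult_left_mono) auto
    ultimately show "1 - l * fbar f y + l\<^sup>2 * c\<^sup>2 \<le> 1" by (simp add: power2_eq_square algebra_simps)
  qed
  finally show ?thesis by simp
qed


lemma ex_le_Suc_iff: "(\<exists>t\<le>Suc n. P t) \<longleftrightarrow> P 0 \<or> (\<exists>t\<le>n. P (Suc t))"
proof
  assume "\<exists>t\<le>Suc n. P t"
  then obtain t where "t \<le> Suc n" "P t" by blast
  then show "P 0 \<or> (\<exists>t\<le>n. P (Suc t))" by (cases t) auto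
qed auto

lemma exp_ge1: "y \<le> K0 \<Longrightarrow> (0::real) \<le> l \<Longrightarrow> 1 \<le> ennreal (exp (- l * (y - K0)))"
  by (simp add: mult_nonneg_nonpos)

lemma stay_n:
  assumes c: "c > 0" and dr: "\<forall>y\<ge>K0. fbar f y \<ge> \<epsilon>"
    and l: "0 < l" "l \<le> 1 / c" "l * c\<^sup>2 \<le> \<epsilon>"
  shows "Bnd c y \<Longrightarrow> emeasure SS {w. \<exists>t\<le>n. traj f y w t \<le> K0} \<le> ennreal (exp (- l * (y - K0)))"
proof (induction n arbitrary: y)
  case 0
  show ?case
  proof (cases "y \<le> K0")
    case True
    have "emeasure SS {w. \<exists>t\<le>0. traj f y w t \<le> K0} \<le> 1" by (rule SQ.P.emeasure_le_1)
    also have "\<dots> \<le> ennreal (exp (- l * (y - K0)))" using True l by (intro exp_ge1) auto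
    finally show ?thesis .
  next
    case False
    then show ?thesis by simp
  qed
next
  case (Suc n)
  show ?case
  proof (cases "y \<le> K0")
    case True
    have "emeasure SS {w. \<exists>t\<le>Suc n. traj f y w t \<le> K0} \<le> 1" by (rule SQ.P.emeasure_le_1)
    also have "\<dots> \<le> ennreal (exp (- l * (y - K0)))" using True l by (intro exp_ge1) auto
    finally show ?thesis .
  next
    case False
    let ?A = "{w. \<exists>t\<le>Suc n. traj f y w t \<le> K0}"
    have Am: "?A \<in> sets SS"
    proof -
      have "{w \<in> space SS. \<exists>t\<le>Suc n. traj f y w t \<le> K0} \<in> sets SS" by measurable
      then show ?thesis by simp
    qed
    have sl: "{w. case_nat s w \<in> ?A} = {w. \<exists>t\<le>n. traj f (y + f y s) w t \<le> K0}" for s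
      using False by (auto simp: ex_le_Suc_iff traj_case_nat simp del: traj.simps(2))
    have bs: "AE s in U01. \<bar>f y s\<bar> \<le> c \<and> Bnd c (y + f y s)" by (rule Bnd_step[OF Suc.prems])
    have "emeasure SS ?A = (\<integral>\<^sup>+ s. emeasure SS {w. case_nat s w \<in> ?A} \<partial>U01)"
      by (rule one_step[OF Am])
    also have "\<dots> = (\<integral>\<^sup>+ s. emeasure SS {w. \<exists>t\<le>n. traj f (y + f y s) w t \<le> K0} \<partial>U01)"
      by (simp only: sl)
    also have "\<dots> \<le> (\<integral>\<^sup>+ s. ennreal (exp (- l * (y + f y s - K0))) \<partial>U01)"
    proof (rule nn_integral_mono_AE)
      show "AE s in U01. emeasure SS {w. \<exists>t\<le>n. traj f (y + f y s) w t \<le> K0} \<le> ennreal (exp (- l * (y + f y s - K0)))"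
        using bs
      proof (rule eventually_mono)
        fix s assume "\<bar>f y s\<bar> \<le> c \<and> Bnd c (y + f y s)"
        then show "emeasure SS {w. \<exists>t\<le>n. traj f (y + f y s) w t \<le> K0} \<le> ennreal (exp (- l * (y + f y s - K0)))"
          using Suc.IH[of "y + f y s"] by simp
      qed
    qed
    also have "\<dots> = (\<integral>\<^sup>+ s. ennreal (exp (- l * (y - K0))) * ennreal (exp (- l * f y s)) \<partial>U01)"
      by (intro nn_integral_cong) (simp add: ennreal_mult[symmetric] exp_add[symmetric] algebra_simps)
    also have "\<dots> = ennreal (exp (- l * (y - K0))) * (\<integral>\<^sup>+ s. ennreal (exp (- l * f y s)) \<partial>U01)"
      by (rule nn_integral_cmult) measurable
    also have "\<dots> \<le> ennreal (exp (- l * (y - K0))) * 1"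
    proof (rule mult_left_mono)
      show "(\<integral>\<^sup>+ s. ennreal (exp (- l * f y s)) \<partial>U01) \<le> 1"
        using bs False dr by (intro mgf_le1[OF c _ _ l]) (auto elim!: eventually_mono)
    qed simp
    finally show ?thesis by simp
  qed
qed

lemma stay:
  assumes c: "c > 0" and dr: "\<forall>y\<ge>K0. fbar f y \<ge> \<epsilon>"
    and l: "0 < l" "l \<le> 1 / c" "l * c\<^sup>2 \<le> \<epsilon>"
    and y: "Bnd c y" "y \<ge> K0 + ln 2 / l"
  shows "measure SS {w. \<forall>t. traj f y w t > K0} \<ge> 1 / 2"
proof -
  let ?B = "\<lambda>n. {w. \<exists>t\<le>n. traj f y w t \<le> K0}"
  have Bm: "?B n \<in> sets SS" for n
  proof -
    have "{w \<in> space SS. \<exists>t\<le>n. traj f y w t \<le> K0} \<in> sets SS" by measurable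
    then show ?thesis by simp
  qed
  have inc: "incseq ?B" unfolding incseq_def by (auto intro: order_trans)
  have U: "(\<Union>n. ?B n) = {w. \<exists>t. traj f y w t \<le> K0}" by auto
  have "emeasure SS {w. \<exists>t. traj f y w t \<le> K0} = (SUP n. emeasure SS (?B n))"
  proof -
    have "range ?B \<subseteq> sets SS" using Bm by auto
    from SUP_emeasure_incseq[OF this inc] U show ?thesis by simp
  qed
  also have "\<dots> \<le> ennreal (exp (- l * (y - K0)))"
    by (rule SUP_least) (rule stay_n[OF c dr l y(1)])
  also have "exp (- l * (y - K0)) \<le> 1 / 2"
  proof -
    have "l * (y - K0) \<ge> ln 2" using y(2) l by (simp add: field_simps)
    then have "exp (- l * (y - K0)) \<le> exp (- ln 2)" by simp
    also have "\<dots> = 1 / 2" by (simp add: exp_minus)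
    finally show ?thesis .
  qed
  finally have e: "emeasure SS {w. \<exists>t. traj f y w t \<le> K0} \<le> ennreal (1 / 2)"
    by (simp add: ennreal_leI order_trans)
  have m: "{w. \<exists>t. traj f y w t \<le> K0} \<in> sets SS"
  proof -
    have "{w \<in> space SS. \<exists>t. traj f y w t \<le> K0} \<in> sets SS" by measurable
    then show ?thesis by simp
  qed
  have "measure SS {w. \<exists>t. traj f y w t \<le> K0} \<le> 1 / 2"
  proof -
    have "ennreal (measure SS {w. \<exists>t. traj f y w t \<le> K0}) \<le> ennreal (1 / 2)"
      using e by (simp only: SQ.P.emeasure_eq_measure)
    then show ?thesis by (subst (asm) ennreal_le_iff) auto
  qed
  moreover have "{w. \<forall>t. traj f y w t > K0} = space SS - {w. \<exists>t. traj f y w t \<le> K0}"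
    using not_le by auto
  ultimately show ?thesis using SQ.P.prob_compl[OF m] by simp
qed

end


context fctx begin

definition Aev :: "real \<Rightarrow> real \<Rightarrow> nat \<Rightarrow> real \<Rightarrow> (nat \<Rightarrow> real) set" where
  "Aev K1 K n x = {w. \<exists>r\<le>n. traj f x w r \<ge> K1 \<and> (\<forall>s\<ge>r. traj f x w s > K)}"

lemma Aev_sets: "Aev K1 K n x \<in> sets SS"
proof -
  have "{w \<in> space SS. \<exists>r\<le>n. traj f x w r \<ge> K1 \<and> (\<forall>s\<ge>r. traj f x w s > K)} \<in> sets SS" by measurable
  then show ?thesis by (simp add: Aev_def)
qed

lemma Aev_step:
  "Aev K1 K n (x + f x s) \<subseteq> {w. case_nat s w \<in> Aev K1 K (Suc n) x}"
proof
  fix w assume "w \<in> Aev K1 K n (x + f x s)"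
  then obtain r where r: "r \<le> n" "traj f (x + f x s) w r \<ge> K1" "\<forall>s'\<ge>r. traj f (x + f x s) w s' > K"
    by (auto simp: Aev_def)
  have "\<forall>s'\<ge>Suc r. traj f x (case_nat s w) s' > K"
  proof (intro allI impI)
    fix s' assume "Suc r \<le> s'"
    then obtain s'' where "s' = Suc s''" "s'' \<ge> r" by (cases s') auto
    then show "traj f x (case_nat s w) s' > K" using r(3) by (simp only: traj_case_nat)
  qed
  moreover have "traj f x (case_nat s w) (Suc r) \<ge> K1" using r(2) by (simp only: traj_case_nat)
  ultimately show "w \<in> {w. case_nat s w \<in> Aev K1 K (Suc n) x}"
    using r(1) unfolding Aev_def by (intro CollectI exI[of _ "Suc r"]) auto
qed

lemma Aev_0: "Aev K1 K 0 x = (if x \<ge> K1 then {w. \<forall>s. traj f x w s > K} else {})"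
  by (auto simp: Aev_def)

lemma Aev_mono: "m \<le> n \<Longrightarrow> Aev K1 K m x \<subseteq> Aev K1 K n x"
  unfolding Aev_def by (auto intro: order_trans)

lemma climb_n:
  assumes stay1: "\<forall>y. Bnd c y \<longrightarrow> y \<ge> K1 \<longrightarrow> measure SS {w. \<forall>t. traj f y w t > K} \<ge> 1/2"
    and cl: "\<forall>x. a \<le> x \<longrightarrow> x < K1 \<longrightarrow> measure U01 {s. f x s \<ge> \<delta>} \<ge> \<eta>"
    and d: "\<delta> > 0" and e: "0 \<le> \<eta>" "\<eta> \<le> 1"
  shows "Bnd c x \<Longrightarrow> a \<le> x \<Longrightarrow> K1 - real n * \<delta> \<le> x \<Longrightarrow> emeasure SS (Aev K1 K n x) \<ge> ennreal (\<eta>^n / 2)"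
proof -
  have base: "ennreal (1/2) \<le> emeasure SS (Aev K1 K 0 x)" if "Bnd c x" "x \<ge> K1" for x
  proof -
    have "emeasure SS (Aev K1 K 0 x) = ennreal (measure SS {w. \<forall>s. traj f x w s > K})"
      using that by (simp add: Aev_0 SQ.P.emeasure_eq_measure)
    also have "\<dots> \<ge> ennreal (1/2)" using stay1 that by (intro ennreal_leI) auto
    finally show ?thesis .
  qed
  show "Bnd c x \<Longrightarrow> a \<le> x \<Longrightarrow> K1 - real n * \<delta> \<le> x \<Longrightarrow> emeasure SS (Aev K1 K n x) \<ge> ennreal (\<eta>^n / 2)"
proof (induction n arbitrary: x)
  case 0
  then have "x \<ge> K1" by simp
  from base[OF 0(1) this] show ?case by simp
next
  case (Suc n)
  show ?case
  proof (cases "x \<ge> K1")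
    case True
    have "ennreal (\<eta> ^ Suc n / 2) \<le> ennreal (1/2)"
      using e by (intro ennreal_leI divide_right_mono power_le_one) auto
    also have "\<dots> \<le> emeasure SS (Aev K1 K 0 x)"
      using True Suc.prems by (intro base) auto
    also have "\<dots> \<le> emeasure SS (Aev K1 K (Suc n) x)"
      by (intro emeasure_mono Aev_mono Aev_sets) auto
    finally show ?thesis .
  next
    case False
    let ?D = "{s. f x s \<ge> \<delta>}"
    have Dm: "?D \<in> sets U01"
    proof -
      have "{s \<in> space U01. f x s \<ge> \<delta>} \<in> sets U01" by measurable
      then show ?thesis by simp
    qed
    have bs: "AE s in U01. \<bar>f x s\<bar> \<le> c \<and> Bnd c (x + f x s)" by (rule Bnd_step[OF Suc.prems(1)])
    have "ennreal (\<eta> ^ Suc n / 2) = ennreal (\<eta> ^ n / 2) * ennreal \<eta>"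
      using e by (simp add: ennreal_mult[symmetric] field_simps)
    also have "\<dots> \<le> ennreal (\<eta> ^ n / 2) * emeasure U01 ?D"
      using cl Suc.prems False by (intro mult_left_mono) (auto simp: U.emeasure_eq_measure intro!: ennreal_leI)
    also have "\<dots> = (\<integral>\<^sup>+ s. ennreal (\<eta> ^ n / 2) * indicator ?D s \<partial>U01)"
      using Dm by (simp add: nn_integral_cmult_indicator)
    also have "\<dots> \<le> (\<integral>\<^sup>+ s. emeasure SS {w. case_nat s w \<in> Aev K1 K (Suc n) x} \<partial>U01)"
    proof (rule nn_integral_mono_AE)
      show "AE s in U01. ennreal (\<eta> ^ n / 2) * indicator ?D s \<le> emeasure SS {w. case_nat s w \<in> Aev K1 K (Suc n) x}"
        using bs
      proof (rule eventually_mono)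
        fix s assume s: "\<bar>f x s\<bar> \<le> c \<and> Bnd c (x + f x s)"
        show "ennreal (\<eta> ^ n / 2) * indicator ?D s \<le> emeasure SS {w. case_nat s w \<in> Aev K1 K (Suc n) x}"
        proof (cases "s \<in> ?D")
          case True
          then have fs: "f x s \<ge> \<delta>" by simp
          have "ennreal (\<eta> ^ n / 2) \<le> emeasure SS (Aev K1 K n (x + f x s))"
          proof (rule Suc.IH)
            show "Bnd c (x + f x s)" using s by simp
            show "a \<le> x + f x s" using Suc.prems(2) fs d by simp
            show "K1 - real n * \<delta> \<le> x + f x s" using Suc.prems(3) fs by (simp add: algebra_simps)
          qed
          also have "\<dots> \<le> emeasure SS {w. case_nat s w \<in> Aev K1 K (Suc n) x}"
          proof (rule emeasure_mono[OF Aev_step])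
            have m: "(\<lambda>w. case_nat s w) \<in> measurable SS SS" by measurable
            have "(\<lambda>w. case_nat s w) -` Aev K1 K (Suc n) x \<inter> space SS \<in> sets SS"
              by (rule measurable_sets[OF m Aev_sets])
            then show "{w. case_nat s w \<in> Aev K1 K (Suc n) x} \<in> sets SS" by (simp add: vimage_def)
          qed
          finally show ?thesis using True by simp
        qed simp
      qed
    qed
    also have "\<dots> = emeasure SS (Aev K1 K (Suc n) x)"
      by (rule one_step[OF Aev_sets, symmetric])
    finally show ?thesis .
  qed
qed
qed

lemma climb:
  assumes stay1: "\<forall>y. Bnd c y \<longrightarrow> y \<ge> K1 \<longrightarrow> measure SS {w. \<forall>t. traj f y w t > K} \<ge> 1/2"
    and cl: "\<forall>x. a \<le> x \<longrightarrow> x < K1 \<longrightarrow> measure U01 {s. f x s \<ge> \<delta>} \<ge> \<eta>"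
    and d: "\<delta> > 0" and e: "0 \<le> \<eta>" "\<eta> \<le> 1"
  shows "\<exists>N. \<forall>x. Bnd c x \<longrightarrow> a \<le> x \<longrightarrow> measure SS {w. \<forall>s\<ge>N. traj f x w s > K} \<ge> \<eta>^N / 2"
proof (intro exI allI impI)
  define N where "N = nat \<lceil>(K1 - a) / \<delta>\<rceil>"
  fix x assume x: "Bnd c x" "a \<le> x"
  have "(K1 - a) / \<delta> \<le> real N" unfolding N_def by linarith
  then have "K1 - a \<le> real N * \<delta>" using d by (simp add: field_simps)
  then have "K1 - real N * \<delta> \<le> x" using x by simp
  from climb_n[OF stay1 cl d e x this]
  have "ennreal (\<eta>^N / 2) \<le> emeasure SS (Aev K1 K N x)" .
  also have "\<dots> \<le> emeasure SS {w. \<forall>s\<ge>N. traj f x w s > K}"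
  proof (rule emeasure_mono)
    show "Aev K1 K N x \<subseteq> {w. \<forall>s\<ge>N. traj f x w s > K}"
      unfolding Aev_def by (auto intro: order_trans)
    have "{w \<in> space SS. \<forall>s\<ge>N. traj f x w s > K} \<in> sets SS" by measurable
    then show "{w. \<forall>s\<ge>N. traj f x w s > K} \<in> sets SS" by simp
  qed
  finally show "measure SS {w. \<forall>s\<ge>N. traj f x w s > K} \<ge> \<eta>^N / 2"
    using e by (simp add: SQ.P.emeasure_eq_measure ennreal_le_iff)
qed

end


lemma unif_gap:
  fixes g :: "real \<Rightarrow> real \<Rightarrow> real"
  assumes cont: "\<And>x. x \<in> {a..b} \<Longrightarrow> isCont (\<lambda>p. g (fst p) (snd p)) (x, 0)"
    and lt: "\<And>x. x \<in> {a..b} \<Longrightarrow> g x 0 < 1"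
  shows "\<exists>\<delta>>0. \<exists>\<eta>>0. \<forall>x\<in>{a..b}. g x \<delta> \<le> 1 - \<eta>"
proof (rule ccontr)
  assume na: "\<not> ?thesis"
  have "\<exists>x\<in>{a..b}. g x (1 / real (Suc n)) > 1 - 1 / real (Suc n)" for n
  proof -
    have "0 < 1 / real (Suc n)" by simp
    then show ?thesis using na by (auto simp: not_le)
  qed
  then obtain X where X: "\<And>n. X n \<in> {a..b}" "\<And>n. g (X n) (1 / real (Suc n)) > 1 - 1 / real (Suc n)"
    by metis
  obtain l r where l: "l \<in> {a..b}" and r: "strict_mono r" and lim: "(X \<circ> r) \<longlonglongrightarrow> l"
    using seq_compactE[OF compact_imp_seq_compact[OF compact_Icc], of X a b] X(1) by blast
  have z0: "(\<lambda>n. 1 / real (Suc n)) \<longlonglongrightarrow> 0"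
    using LIMSEQ_inverse_real_of_nat by (simp add: inverse_eq_divide)
  have z: "(\<lambda>n. 1 / real (Suc (r n))) \<longlonglongrightarrow> 0"
    using LIMSEQ_subseq_LIMSEQ[OF z0 r] by (simp add: o_def)
  have "(\<lambda>n. (X (r n), 1 / real (Suc (r n)))) \<longlonglongrightarrow> (l, 0)"
    using lim z by (intro tendsto_Pair) (auto simp: o_def)
  from isCont_tendsto_compose[OF cont[OF l] this]
  have A: "(\<lambda>n. g (X (r n)) (1 / real (Suc (r n)))) \<longlonglongrightarrow> g l 0" by simp
  have B: "(\<lambda>n. 1 - 1 / real (Suc (r n))) \<longlonglongrightarrow> 1"
    using tendsto_diff[OF tendsto_const z, of 1] by simp
  have "1 \<le> g l 0"
    by (rule tendsto_le[OF trivial_limit_sequentially A B]) (intro always_eventually allI less_imp_le X(2))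
  with lt[OF l] show False by simp
qed

context fctx begin

lemma up:
  assumes c: "c > 0" and eps: "\<epsilon> > 0" and dr: "\<forall>y\<ge>K0. fbar f y \<ge> \<epsilon>"
    and clh: "\<forall>K1. \<exists>\<delta>>0. \<exists>\<eta>>0. \<forall>x. a \<le> x \<longrightarrow> x < K1 \<longrightarrow> measure U01 {s. f x s \<ge> \<delta>} \<ge> \<eta>"
  shows "\<exists>N q. q > 0 \<and> (\<forall>x. Bnd c x \<longrightarrow> a \<le> x \<longrightarrow> measure SS {w. \<forall>s\<ge>N. traj f x w s > K} \<ge> q)"
proof -
  define K0' where "K0' = max K0 K"
  define l where "l = min (1 / c) (\<epsilon> / c\<^sup>2)"
  have l: "0 < l" "l \<le> 1 / c" "l * c\<^sup>2 \<le> \<epsilon>"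
    using c eps by (auto simp: l_def min_def field_simps)
  have dr': "\<forall>y\<ge>K0'. fbar f y \<ge> \<epsilon>" using dr by (auto simp: K0'_def)
  define K1 where "K1 = K0' + ln 2 / l"
  have stay1: "\<forall>y. Bnd c y \<longrightarrow> y \<ge> K1 \<longrightarrow> measure SS {w. \<forall>t. traj f y w t > K} \<ge> 1/2"
  proof (intro allI impI)
    fix y assume y: "Bnd c y" "y \<ge> K1"
    have "1/2 \<le> measure SS {w. \<forall>t. traj f y w t > K0'}"
      using y by (intro stay[OF c dr' l]) (auto simp: K1_def)
    also have "\<dots> \<le> measure SS {w. \<forall>t. traj f y w t > K}"
    proof (rule SQ.P.finite_measure_mono)
      show "{w. \<forall>t. traj f y w t > K0'} \<subseteq> {w. \<forall>t. traj f y w t > K}"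
        by (auto simp: K0'_def)
      have "{w \<in> space SS. \<forall>t. traj f y w t > K} \<in> sets SS" by measurable
      then show "{w. \<forall>t. traj f y w t > K} \<in> sets SS" by simp
    qed
    finally show "measure SS {w. \<forall>t. traj f y w t > K} \<ge> 1/2" .
  qed
  obtain \<delta> \<eta> where d: "\<delta> > 0" and e: "\<eta> > 0"
    and cl: "\<forall>x. a \<le> x \<longrightarrow> x < K1 \<longrightarrow> measure U01 {s. f x s \<ge> \<delta>} \<ge> \<eta>"
    using clh by blast
  define \<eta>' where "\<eta>' = min \<eta> 1"
  have cl': "\<forall>x. a \<le> x \<longrightarrow> x < K1 \<longrightarrow> measure U01 {s. f x s \<ge> \<delta>} \<ge> \<eta>'"
    using cl by (auto simp: \<eta>'_def min_le_iff_disj)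
  have e': "0 \<le> \<eta>'" "\<eta>' \<le> 1" "0 < \<eta>'" using e by (auto simp: \<eta>'_def)
  obtain N where N: "\<forall>x. Bnd c x \<longrightarrow> a \<le> x \<longrightarrow> measure SS {w. \<forall>s\<ge>N. traj f x w s > K} \<ge> \<eta>'^N / 2"
    using climb[OF stay1 cl' d e'(1,2)] by blast
  show ?thesis
    by (rule exI[of _ N], rule exI[of _ "\<eta>'^N / 2"]) (use N e' in auto)
qed

end

lemma fctx_refl:
  assumes "fctx f"
  shows "fctx (\<lambda>m u. - f (- m) u)"
proof
  interpret fctx f by fact
  have "(\<lambda>z. - f (- fst z) (snd z)) \<in> borel_measurable (borel \<Otimes>\<^sub>M borel :: (real \<times> real) measure)"
    by (intro borel_measurable_uminus f_comp) measurable
  then show "(\<lambda>(m, u). - f (- m) u) \<in> borel_measurable borel"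
    by (simp add: split_beta' borel_prod)
qed

lemma traj_refl: "traj (\<lambda>m u. - f (- m) u) (- x) w n = - traj f x w n"
  by (induction n) auto

lemma Bnd_refl:
  assumes "fctx f" "fctx.Bnd f c x"
  shows "fctx.Bnd (\<lambda>m u. - f (- m) u) c (- x)"
  using assms fctx_refl[OF assms(1)] by (simp add: fctx.Bnd_def traj_refl)

lemma fbar_refl: "fbar (\<lambda>m u. - f (- m) u) y = - fbar f (- y)"
  unfolding fbar_def by simp


lemma det_lim:
  fixes X :: "nat \<Rightarrow> real"
  assumes inc: "\<forall>t. \<bar>X (Suc t) - X t\<bar> \<le> c"
    and ev: "\<forall>K::nat. eventually (\<lambda>t. \<bar>X t\<bar> > real K) sequentially"
  shows "filterlim X at_top sequentially \<or> filterlim X at_bot sequentially"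
proof -
  define K where "K = nat \<lceil>\<bar>c\<bar>\<rceil> + 1"
  have Kc: "real K > \<bar>c\<bar>" unfolding K_def by linarith
  obtain T where T: "\<And>t. t \<ge> T \<Longrightarrow> \<bar>X t\<bar> > real K"
    using ev[rule_format, of K] by (auto simp: eventually_sequentially)
  have pos: "X t > real K" if "X T > real K" "t \<ge> T" for t
    using that(2)
  proof (induction t rule: dec_induct)
    case base then show ?case using that(1) .
  next
    case (step t)
    have "X (Suc t) \<ge> X t - c" using inc[rule_format, of t] by linarith
    moreover have "\<bar>X (Suc t)\<bar> > real K" using T step by simp
    ultimately show ?case using step Kc by linarith
  qed
  have neg: "X t < - real K" if "X T < - real K" "t \<ge> T" for t
    using that(2)
  proof (induction t rule: dec_induct)
    case base then show ?case using that(1) .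
  next
    case (step t)
    have "X (Suc t) \<le> X t + c" using inc[rule_format, of t] by linarith
    moreover have "\<bar>X (Suc t)\<bar> > real K" using T step by simp
    ultimately show ?case using step Kc by linarith
  qed
  have "X T > real K \<or> X T < - real K" using T[of T] by linarith
  then show ?thesis
  proof
    assume a: "X T > real K"
    have "filterlim X at_top sequentially"
      unfolding filterlim_at_top
    proof
      fix Z :: real
      have "eventually (\<lambda>t. \<bar>X t\<bar> > real (nat \<lceil>\<bar>Z\<bar>\<rceil>) \<and> t \<ge> T) sequentially"
        using eventually_conj[OF ev[rule_format, of "nat \<lceil>\<bar>Z\<bar>\<rceil>"] eventually_ge_at_top[of T]] by simp
      then show "eventually (\<lambda>t. Z \<le> X t) sequentially"
      proof (rule eventually_mono)
        fix t assume t: "\<bar>X t\<bar> > real (nat \<lceil>\<bar>Z\<bar>\<rceil>) \<and> t \<ge> T"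
        then have "X t > 0" using pos[OF a] by (smt (verit) of_nat_0_le_iff)
        then show "Z \<le> X t" using t by linarith
      qed
    qed
    then show ?thesis ..
  next
    assume a: "X T < - real K"
    have "filterlim X at_bot sequentially"
      unfolding filterlim_at_bot
    proof
      fix Z :: real
      have "eventually (\<lambda>t. \<bar>X t\<bar> > real (nat \<lceil>\<bar>Z\<bar>\<rceil>) \<and> t \<ge> T) sequentially"
        using eventually_conj[OF ev[rule_format, of "nat \<lceil>\<bar>Z\<bar>\<rceil>"] eventually_ge_at_top[of T]] by simp
      then show "eventually (\<lambda>t. X t \<le> Z) sequentially"
      proof (rule eventually_mono)
        fix t assume t: "\<bar>X t\<bar> > real (nat \<lceil>\<bar>Z\<bar>\<rceil>) \<and> t \<ge> T"
        then have "X t < 0" using neg[OF a] by (smt (verit) of_nat_0_le_iff)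
        then show "X t \<le> Z" using t by linarith
      qed
    qed
    then show ?thesis ..
  qed
qed

lemma card_window:
  fixes P :: "nat \<Rightarrow> bool" and Q :: "nat \<Rightarrow> bool"
  assumes "\<And>r s. P r \<Longrightarrow> s \<ge> N \<Longrightarrow> \<not> P (r + s)"
  shows "card {r\<in>{..<n}. P r} \<le> N"
proof (cases "{r\<in>{..<n}. P r} = {}")
  case True then show ?thesis by (metis card.empty zero_le)
next
  case False
  let ?R = "{r\<in>{..<n}. P r}"
  define r0 where "r0 = Min ?R"
  have fin: "finite ?R" by simp
  have r0: "r0 \<in> ?R" unfolding r0_def using Min_in[OF fin False] .
  have "?R \<subseteq> {r0..<r0 + N}"
  proof
    fix r assume r: "r \<in> ?R"
    have "r0 \<le> r" unfolding r0_def using Min_le[OF fin r] .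
    moreover have "r < r0 + N"
    proof (rule ccontr)
      assume "\<not> r < r0 + N"
      then have "r = r0 + (r - r0)" "r - r0 \<ge> N" by auto
      with assms[of r0 "r - r0"] r0 r show False by auto
    qed
    ultimately show "r \<in> {r0..<r0 + N}" by simp
  qed
  then have "card ?R \<le> card {r0..<r0 + N}" by (intro card_mono) auto
  then show ?thesis by simp
qed

context fctx begin

lemma main_SS:
  assumes c: "c > 0" and b0: "Bnd c m0"
    and esc: "\<exists>N q. q > 0 \<and> (\<forall>x. Bnd c x \<longrightarrow> measure SS {w. \<forall>s\<ge>N. \<bar>traj f x w s\<bar> > K} \<ge> q)"
  shows "AE w in SS. eventually (\<lambda>t. \<bar>traj f m0 w t\<bar> > K) sequentially"
proof -
  obtain N q where q: "q > 0" and hq: "\<And>x. Bnd c x \<Longrightarrow> measure SS {w. \<forall>s\<ge>N. \<bar>traj f x w s\<bar> > K} \<ge> q"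
    using esc by blast
  define G where "G r = {w. \<bar>traj f m0 w r\<bar> \<le> K}" for r
  define L where "L r = {w. \<bar>traj f m0 w r\<bar> \<le> K \<and> (\<forall>s\<ge>N. \<bar>traj f m0 w (r + s)\<bar> > K)}" for r
  have Gm: "G r \<in> sets SS" for r
  proof -
    have "{w \<in> space SS. \<bar>traj f m0 w r\<bar> \<le> K} \<in> sets SS" by measurable
    then show ?thesis by (simp add: G_def)
  qed
  have Lm: "L r \<in> sets SS" for r
  proof -
    have "{w \<in> space SS. \<bar>traj f m0 w r\<bar> \<le> K \<and> (\<forall>s\<ge>N. \<bar>traj f m0 w (r + s)\<bar> > K)} \<in> sets SS" by measurable
    then show ?thesis by (simp add: L_def)
  qed
  have escm: "{w. \<forall>s\<ge>N. \<bar>traj f x w s\<bar> > K} \<in> sets SS" for x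
  proof -
    have "{w \<in> space SS. \<forall>s\<ge>N. \<bar>traj f x w s\<bar> > K} \<in> sets SS" by measurable
    then show ?thesis by simp
  qed
  have GL: "q * measure SS (G r) \<le> measure SS (L r)" for r
  proof -
    have sl: "{w'. comb_seq r w w' \<in> L r} =
      (if \<bar>traj f m0 w r\<bar> \<le> K then {w'. \<forall>s\<ge>N. \<bar>traj f (traj f m0 w r) w' s\<bar> > K} else {})" for w
      by (auto simp: L_def traj_comb_le[of r r] traj_comb_add)
    have "ennreal (q * measure SS (G r)) = (\<integral>\<^sup>+ w. ennreal q * indicator (G r) w \<partial>SS)"
      using Gm q by (simp add: nn_integral_cmult_indicator SQ.P.emeasure_eq_measure ennreal_mult)
    also have "\<dots> \<le> (\<integral>\<^sup>+ w. emeasure SS {w'. comb_seq r w w' \<in> L r} \<partial>SS)"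
    proof (rule nn_integral_mono_AE)
      show "AE w in SS. ennreal q * indicator (G r) w \<le> emeasure SS {w'. comb_seq r w w' \<in> L r}"
        using Bnd_comb[OF b0, of r]
      proof (rule eventually_mono)
        fix w assume bw: "Bnd c (traj f m0 w r)"
        show "ennreal q * indicator (G r) w \<le> emeasure SS {w'. comb_seq r w w' \<in> L r}"
        proof (cases "\<bar>traj f m0 w r\<bar> \<le> K")
          case True
          have "ennreal q \<le> ennreal (measure SS {w'. \<forall>s\<ge>N. \<bar>traj f (traj f m0 w r) w' s\<bar> > K})"
            using hq[OF bw] by (rule ennreal_leI)
          then show ?thesis using True by (simp add: sl G_def SQ.P.emeasure_eq_measure)
        next
          case False
          then show ?thesis by (simp add: G_def)
        qed
      qed
    qed
    also have "\<dots> = emeasure SS (L r)" by (rule comb_step[OF Lm, symmetric])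
    also have "\<dots> = ennreal (measure SS (L r))" by (simp add: SQ.P.emeasure_eq_measure)
    finally show ?thesis by (subst (asm) ennreal_le_iff) auto
  qed
  have Lsum: "(\<Sum>r<n. measure SS (L r)) \<le> real N" for n
  proof -
    have "(\<Sum>r<n. measure SS (L r)) = (\<Sum>r<n. \<integral> w. indicator (L r) w \<partial>SS)"
      by simp
    also have "\<dots> = (\<integral> w. (\<Sum>r<n. indicator (L r) w) \<partial>SS)"
      by (subst Bochner_Integration.integral_sum) (auto intro!: integrable_real_indicator Lm simp: less_top[symmetric] SQ.P.emeasure_finite)
    also have "\<dots> \<le> (\<integral> w. real N \<partial>SS)"
    proof (rule integral_mono)
      show "integrable SS (\<lambda>w. \<Sum>r<n. indicator (L r) w :: real)"
        by (auto intro!: integrable_real_indicator Lm simp: less_top[symmetric] SQ.P.emeasure_finite)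
      show "integrable SS (\<lambda>w. real N)" by simp
      fix w
      have "(\<Sum>r<n. indicator (L r) w :: real) = (\<Sum>r<n. indicator {r. w \<in> L r} r)"
        by (simp add: indicator_def)
      also have "\<dots> = real (card ({..<n} \<inter> {r. w \<in> L r}))"
      proof -
        have "(\<Sum>r<n. indicator {r. w \<in> L r} r :: real) = real (\<Sum>r<n. indicator {r. w \<in> L r} r :: nat)"
          by (simp add: of_nat_sum indicator_def)
        also have "(\<Sum>r<n. indicator {r. w \<in> L r} r :: nat) = card ({..<n} \<inter> {r. w \<in> L r})"
          by (rule sum_indicator_eq_card) simp
        finally show ?thesis .
      qed
      also have "card ({..<n} \<inter> {r. w \<in> L r}) = card {r\<in>{..<n}. w \<in> L r}"
        by (rule arg_cong[where f=card]) auto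
      also have "\<dots> \<le> N"
      proof (rule card_window)
        fix r s assume "w \<in> L r" "N \<le> s"
        then show "w \<notin> L (r + s)" by (auto simp: L_def)
      qed
      finally show "(\<Sum>r<n. indicator (L r) w :: real) \<le> real N" by simp
    qed
    also have "\<dots> = real N" using SQ.P.prob_space by simp
    finally show ?thesis .
  qed
  have sG: "summable (\<lambda>r. measure SS (G r))"
  proof (rule summableI_nonneg_bounded)
    fix n
    have "(\<Sum>r<n. measure SS (G r)) = (\<Sum>r<n. q * measure SS (G r)) / q"
      using q by (simp add: sum_distrib_left[symmetric])
    also have "\<dots> \<le> (\<Sum>r<n. measure SS (L r)) / q"
      using q GL by (intro divide_right_mono sum_mono) auto
    also have "\<dots> \<le> real N / q"
      using q Lsum by (intro divide_right_mono) auto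
    finally show "(\<Sum>r<n. measure SS (G r)) \<le> real N / q" .
  qed simp
  have "AE w in SS. eventually (\<lambda>r. w \<in> space SS - G r) sequentially"
    by (rule borel_cantelli_AE1[OF Gm _ sG]) (simp add: SQ.P.emeasure_eq_measure)
  then show ?thesis
    by (rule eventually_mono) (auto simp: G_def not_le elim!: eventually_mono)
qed

end


context fctx begin

lemma esc:
  assumes c: "c > 0" and eps: "\<epsilon> > 0"
    and drU: "\<forall>y\<ge>Ku. fbar f y \<ge> \<epsilon>" and drD: "\<forall>y\<le>Kd. fbar f y \<le> - \<epsilon>"
    and cont: "\<And>m. isCont (\<lambda>p. cdfF f (fst p) (snd p)) (m, 0)"
    and mc1: "\<forall>m\<ge>mc. cdfF f m 0 < 1" and mc2: "\<forall>m\<le>mc. cdfF f m 0 > 0"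
  shows "\<exists>N q. q > 0 \<and> (\<forall>x. Bnd c x \<longrightarrow> measure SS {w. \<forall>s\<ge>N. \<bar>traj f x w s\<bar> > K} \<ge> q)"
proof -
  have cdf: "cdfF f x d = measure U01 {s. f x s \<le> d}" for x d
    by (simp add: cdfF_def)
  have setm: "{s. P (f x s)} \<in> sets U01" if "{u. P u} \<in> sets borel" for P x
  proof -
    have "(\<lambda>s. f x s) -` {u. P u} \<inter> space U01 \<in> sets U01"
      using measurable_sets[OF meas_const that] .
    then show ?thesis by (simp add: vimage_def)
  qed
  have clU: "\<forall>K1. \<exists>\<delta>>0. \<exists>\<eta>>0. \<forall>x. mc \<le> x \<longrightarrow> x < K1 \<longrightarrow> measure U01 {s. f x s \<ge> \<delta>} \<ge> \<eta>"
  proof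
    fix K1
    obtain \<delta> \<eta> where d: "\<delta> > 0" "\<eta> > 0" and g: "\<forall>x\<in>{mc..K1}. cdfF f x \<delta> \<le> 1 - \<eta>"
    proof -
      have "\<exists>\<delta>>0. \<exists>\<eta>>0. \<forall>x\<in>{mc..K1}. cdfF f x \<delta> \<le> 1 - \<eta>"
      proof (rule unif_gap)
        fix x assume "x \<in> {mc..K1}"
        show "isCont (\<lambda>p. cdfF f (fst p) (snd p)) (x, 0)" by (rule cont)
        show "cdfF f x 0 < 1" using mc1 \<open>x \<in> {mc..K1}\<close> by simp
      qed
      then show ?thesis using that by blast
    qed
    have "measure U01 {s. f x s \<ge> \<delta>} \<ge> \<eta>" if "mc \<le> x" "x < K1" for x
    proof -
      have m1: "{s. f x s \<le> \<delta>} \<in> sets U01" by (rule setm) simp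
      have m2: "{s. f x s \<ge> \<delta>} \<in> sets U01" by (rule setm) simp
      have "x \<in> {mc..K1}" using that by simp
      from g[rule_format, OF this] have "\<eta> \<le> 1 - cdfF f x \<delta>" by linarith
      also have "\<dots> = measure U01 (space U01 - {s. f x s \<le> \<delta>})"
        by (simp add: cdf U.prob_compl[OF m1, simplified])
      also have "\<dots> \<le> measure U01 {s. f x s \<ge> \<delta>}"
        by (rule U.finite_measure_mono[OF _ m2]) auto
      finally show ?thesis .
    qed
    with d show "\<exists>\<delta>>0. \<exists>\<eta>>0. \<forall>x. mc \<le> x \<longrightarrow> x < K1 \<longrightarrow> measure U01 {s. f x s \<ge> \<delta>} \<ge> \<eta>"
      by blast
  qed
  have clD: "\<forall>K1. \<exists>\<delta>>0. \<exists>\<eta>>0. \<forall>x. - mc \<le> x \<longrightarrow> x < K1 \<longrightarrow> measure U01 {s. - f (- x) s \<ge> \<delta>} \<ge> \<eta>"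
  proof
    fix K1
    have cont': "isCont (\<lambda>p. 1 - cdfF f (fst p) (- snd p)) (y, 0)" for y
    proof -
      have c1: "isCont (\<lambda>p::real \<times> real. (fst p, - snd p)) (y, 0)"
        by (intro continuous_intros)
      have c2: "isCont (\<lambda>p. cdfF f (fst p) (snd p)) ((\<lambda>p::real \<times> real. (fst p, - snd p)) (y, 0))"
        using cont[of y] by simp
      have "isCont (\<lambda>p. cdfF f (fst p) (- snd p)) (y, 0)"
        using isCont_o2[OF c1 c2] by simp
      then show ?thesis by (intro continuous_intros)
    qed
    obtain \<delta> \<eta> where d: "\<delta> > 0" "\<eta> > 0" and g: "\<forall>y\<in>{- K1..mc}. 1 - cdfF f y (- \<delta>) \<le> 1 - \<eta>"
    proof -
      have "\<exists>\<delta>>0. \<exists>\<eta>>0. \<forall>y\<in>{- K1..mc}. 1 - cdfF f y (- \<delta>) \<le> 1 - \<eta>"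
      proof (rule unif_gap[where g="\<lambda>y d. 1 - cdfF f y (- d)"])
        fix y assume "y \<in> {- K1..mc}"
        show "isCont (\<lambda>p. 1 - cdfF f (fst p) (- snd p)) (y, 0)" by (rule cont')
        show "1 - cdfF f y (- 0) < 1" using mc2 \<open>y \<in> {- K1..mc}\<close> by simp
      qed
      then show ?thesis using that by blast
    qed
    have "measure U01 {s. - f (- x) s \<ge> \<delta>} \<ge> \<eta>" if "- mc \<le> x" "x < K1" for x
    proof -
      have "\<eta> \<le> cdfF f (- x) (- \<delta>)" using g[rule_format, of "- x"] that by auto
      also have "\<dots> = measure U01 {s. - f (- x) s \<ge> \<delta>}"
      proof -
        have "{s. f (- x) s \<le> - \<delta>} = {s. - f (- x) s \<ge> \<delta>}" by auto
        then show ?thesis by (simp add: cdf)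
      qed
      finally show ?thesis .
    qed
    with d show "\<exists>\<delta>>0. \<exists>\<eta>>0. \<forall>x. - mc \<le> x \<longrightarrow> x < K1 \<longrightarrow> measure U01 {s. - f (- x) s \<ge> \<delta>} \<ge> \<eta>"
      by blast
  qed
  obtain N1 q1 where q1: "q1 > 0" and h1: "\<forall>x. Bnd c x \<longrightarrow> mc \<le> x \<longrightarrow> measure SS {w. \<forall>s\<ge>N1. traj f x w s > K} \<ge> q1"
    using up[OF c eps drU clU] by blast
  interpret R: fctx "\<lambda>m u. - f (- m) u" by (rule fctx_refl) (rule fctx_axioms)
  have drU': "\<forall>y\<ge>- Kd. fbar (\<lambda>m u. - f (- m) u) y \<ge> \<epsilon>"
  proof (intro allI impI)
    fix y :: real assume "y \<ge> - Kd"
    then have "- y \<le> Kd" by simp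
    then have "fbar f (- y) \<le> - \<epsilon>" using drD by blast
    then show "fbar (\<lambda>m u. - f (- m) u) y \<ge> \<epsilon>" by (simp add: fbar_refl)
  qed
  obtain N2 q2 where q2: "q2 > 0" and h2: "\<forall>x. R.Bnd c x \<longrightarrow> - mc \<le> x \<longrightarrow> measure SS {w. \<forall>s\<ge>N2. traj (\<lambda>m u. - f (- m) u) x w s > K} \<ge> q2"
    using R.up[OF c eps drU' clD] by blast
  define N where "N = max N1 N2"
  define q where "q = min q1 q2"
  have escm: "{w. \<forall>s\<ge>N. \<bar>traj f x w s\<bar> > K} \<in> sets SS" for x
  proof -
    have "{w \<in> space SS. \<forall>s\<ge>N. \<bar>traj f x w s\<bar> > K} \<in> sets SS" by measurable
    then show ?thesis by simp
  qed
  show ?thesis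
  proof (intro exI conjI allI impI)
    show "q > 0" using q1 q2 by (simp add: q_def)
    fix x assume bx: "Bnd c x"
    show "measure SS {w. \<forall>s\<ge>N. \<bar>traj f x w s\<bar> > K} \<ge> q"
    proof (cases "mc \<le> x")
      case True
      have "q \<le> q1" by (simp add: q_def)
      also have "\<dots> \<le> measure SS {w. \<forall>s\<ge>N1. traj f x w s > K}" using h1 bx True by blast
      also have "\<dots> \<le> measure SS {w. \<forall>s\<ge>N. \<bar>traj f x w s\<bar> > K}"
        by (rule SQ.P.finite_measure_mono[OF _ escm]) (auto simp: N_def)
      finally show ?thesis .
    next
      case False
      have bx': "R.Bnd c (- x)" using Bnd_refl[OF fctx_axioms bx] .
      have "q \<le> q2" by (simp add: q_def)
      also have "\<dots> \<le> measure SS {w. \<forall>s\<ge>N2. traj (\<lambda>m u. - f (- m) u) (- x) w s > K}"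
        using h2 bx' False by auto
      also have "\<dots> \<le> measure SS {w. \<forall>s\<ge>N. \<bar>traj f x w s\<bar> > K}"
        by (rule SQ.P.finite_measure_mono[OF _ escm]) (auto simp: N_def traj_refl)
      finally show ?thesis .
    qed
  qed
qed

end


theorem theorem2:
  fixes M :: "'a measure" and f :: "real \<Rightarrow> real \<Rightarrow> real" and m0 :: real
    and \<xi> :: "nat \<Rightarrow> 'a \<Rightarrow> real"
  assumes "prob_space M"
    and f_meas: "(\<lambda>(m, u). f m u) \<in> borel_measurable borel"
    and xi_rv: "\<And>t. \<xi> t \<in> borel_measurable M"
    and xi_indep: "prob_space.indep_vars M (\<lambda>_. borel) \<xi> UNIV"
    and xi_unif: "\<And>t. distr M borel (\<xi> t) = U01"
    and F_cont: "\<And>m. isCont (\<lambda>p. cdfF f (fst p) (snd p)) (m, 0)"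
    and m_circ: "\<exists>mc. (\<forall>m\<ge>mc. cdfF f m 0 < 1) \<and> (\<forall>m\<le>mc. cdfF f m 0 > 0)"
    and bounded: "\<exists>c. \<forall>t. AE \<omega> in M. \<bar>proc f m0 \<xi> (Suc t) \<omega> - proc f m0 \<xi> t \<omega>\<bar> \<le> c"
    and drift: "\<exists>\<epsilon>>0. (\<forall>\<^sub>F m in at_top. fbar f m > \<epsilon>) \<and> (\<forall>\<^sub>F m in at_bot. fbar f m < - \<epsilon>)"
  shows "AE \<omega> in M. filterlim (\<lambda>t. proc f m0 \<xi> t \<omega>) at_top sequentially
                  \<or> filterlim (\<lambda>t. proc f m0 \<xi> t \<omega>) at_bot sequentially"
proof -
  interpret M: prob_space M by fact
  interpret fctx f by (rule fctx.intro) (rule f_meas)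
  obtain c0 where c0: "\<And>t. AE \<omega> in M. \<bar>proc f m0 \<xi> (Suc t) \<omega> - proc f m0 \<xi> t \<omega>\<bar> \<le> c0"
    using bounded by blast
  define c where "c = max c0 1"
  have c: "c > 0" by (simp add: c_def)
  obtain \<epsilon> where eps: "\<epsilon> > 0" and evU: "\<forall>\<^sub>F m in at_top. fbar f m > \<epsilon>"
    and evD: "\<forall>\<^sub>F m in at_bot. fbar f m < - \<epsilon>"
    using drift by blast
  obtain Ku where Ku: "\<forall>y\<ge>Ku. fbar f y \<ge> \<epsilon>"
    using evU unfolding eventually_at_top_linorder by (auto intro: less_imp_le)
  obtain Kd where Kd: "\<forall>y\<le>Kd. fbar f y \<le> - \<epsilon>"
    using evD unfolding eventually_at_bot_linorder by (auto intro: less_imp_le)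
  obtain mc where mc1: "\<forall>m\<ge>mc. cdfF f m 0 < 1" and mc2: "\<forall>m\<le>mc. cdfF f m 0 > 0"
    using m_circ by blast
  define X where "X = (\<lambda>\<omega> i. \<xi> i \<omega>)"
  have Xm_borel: "X \<in> measurable M (PiM UNIV (\<lambda>_. borel))"
    unfolding X_def by (intro measurable_PiM_single') (auto simp: space_PiM xi_rv)
  have Xm: "X \<in> measurable M SS"
    using Xm_borel by (simp add: measurable_cong_sets[OF refl sets_SS])
  have D: "distr M SS X = SS"
  proof -
    have "distr M (PiM UNIV (\<lambda>_. borel)) (\<lambda>x. \<lambda>i\<in>UNIV. \<xi> i x) = (PiM UNIV (\<lambda>i. distr M borel (\<xi> i)))"
      using M.indep_vars_iff_distr_eq_PiM[where I=UNIV and M'="\<lambda>_. borel" and X=\<xi>] xi_indep xi_rv by simp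
    also have "\<dots> = SS" by (simp add: xi_unif)
    finally have "distr M (PiM UNIV (\<lambda>_. borel)) X = SS" by (simp add: X_def restrict_def)
    moreover have "distr M SS X = distr M (PiM UNIV (\<lambda>_. borel)) X"
      by (rule distr_cong) (simp_all add: sets_SS)
    ultimately show ?thesis by simp
  qed
  have b0: "Bnd c m0"
  proof -
    have "AE \<omega> in M. \<forall>t. \<bar>proc f m0 \<xi> (Suc t) \<omega> - proc f m0 \<xi> t \<omega>\<bar> \<le> c0"
      using c0 by (simp add: AE_all_countable)
    then have "AE \<omega> in M. \<forall>t. \<bar>f (traj f m0 (X \<omega>) t) (X \<omega> t)\<bar> \<le> c"
      by (rule eventually_mono) (auto simp: proc_path X_def c_def intro: order_trans)
    then have "AE w in distr M SS X. \<forall>t. \<bar>f (traj f m0 w t) (w t)\<bar> \<le> c"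
    proof (subst AE_distr_iff[OF Xm])
      have "{w \<in> space SS. \<forall>t. \<bar>f (traj f m0 w t) (w t)\<bar> \<le> c} \<in> sets SS"
        by measurable
      then show "{w \<in> space SS. \<forall>t. \<bar>f (traj f m0 w t) (w t)\<bar> \<le> c} \<in> sets SS" .
    qed
    then show ?thesis unfolding Bnd_def D .
  qed
  have "AE w in SS. \<forall>K::nat. eventually (\<lambda>t. \<bar>traj f m0 w t\<bar> > real K) sequentially"
    unfolding AE_all_countable
    using main_SS[OF c b0 esc[OF c eps Ku Kd F_cont mc1 mc2]] by blast
  moreover have "AE w in SS. \<forall>t. \<bar>traj f m0 w (Suc t) - traj f m0 w t\<bar> \<le> c"
    using b0 unfolding Bnd_def by (rule eventually_mono) simp
  ultimately have "AE w in SS. filterlim (traj f m0 w) at_top sequentially \<or> filterlim (traj f m0 w) at_bot sequentially"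
    by eventually_elim (rule det_lim)
  then have "AE w in distr M SS X. filterlim (traj f m0 w) at_top sequentially \<or> filterlim (traj f m0 w) at_bot sequentially"
    unfolding D .
  from AE_distrD[OF Xm this]
  show ?thesis by (simp add: proc_path X_def)
qed


end
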